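(* Let $N\ge1$, $\sigma\ge0$, and let $(x_i(t),v_i(t))_{i=1}^N$, $t\ge 0$, be a solution of $$\dot x_i=v_i,\qquad \dot v_i=-\frac{\|v_i\|^2}{\|x_i\|^2}x_i+\sum_{j=1}^N\frac{\psi_{ij}}{N}\big(R(x_j,x_i)v_j-v_i\big)+\sum_{k=1}^N\frac{\sigma}{N}\big(\|x_i\|^2x_k-\langle x_i,x_k\rangle x_i\big),$$ where the $\psi_{ij}$ are nonnegative bounded functions for all $i,j\in\{1,\dots,N\}$. Assume the initial data satisfy $\langle v_i(0),x_i(0)\rangle=0$ and $\|x_i(0)\|=1$ for all $i$. Then for all $i\in\{1,\dots,N\}$ and all $t>0$, $$\langle v_i(t),x_i(t)\rangle=0\quad\text{and}\quad \|x_i(t)\|=1.$$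
   Context: $\|\cdot\|$ is the Euclidean norm and $\langle\cdot,\cdot\rangle$ the standard inner product on $\mathbb{R}^3$; $\mathbb{S}^2$ is the unit sphere. For column vectors $x_1,x_2\in\mathbb{S}^2$ with $x_1\neq -x_2$, the rotation matrix is $R(x_1,x_2)=I$ if $x_1=x_2$, and otherwise $$R(x_1,x_2)=\langle x_1,x_2\rangle I-x_1x_2^T+x_2x_1^T+(1-\langle x_1,x_2\rangle)\,u u^T,\qquad u=\frac{x_1\times x_2}{\|x_1\times x_2\|}.$$ When $x_j=-x_i$ the term $\psi_{ij}R(x_j,x_i)v_j$ is taken to be $0$. *)

theory Defs
  imports "HOL-Analysis.Analysis" "HOL-Analysis.Cross3"
begin

definition outer3 :: "real^3 \<Rightarrow> real^3 \<Rightarrow> real^3^3" where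
  "outer3 a b = (\<chi> i j. a $ i * b $ j)"

definition rotR :: "real^3 \<Rightarrow> real^3 \<Rightarrow> real^3^3" where
  "rotR x1 x2 =
     (if x1 = x2 then mat 1
      else (let u = (1 / norm (cross3 x1 x2)) *\<^sub>R cross3 x1 x2 in
            (x1 \<bullet> x2) *\<^sub>R mat 1 - outer3 x1 x2 + outer3 x2 x1
            + (1 - x1 \<bullet> x2) *\<^sub>R outer3 u u))"

text \<open>The term psi_ij R(x_j,x_i) v_j, taken to be 0 when x_j = -x_i.\<close>
definition align_term :: "real \<Rightarrow> real^3 \<Rightarrow> real^3 \<Rightarrow> real^3 \<Rightarrow> real^3" where
  "align_term p xj xi vj = (if xj = - xi then 0 else p *\<^sub>R (rotR xj xi *v vj))"

definition vfield ::
  "nat \<Rightarrow> real \<Rightarrow> (nat \<Rightarrow> nat \<Rightarrow> real \<Rightarrow> real) \<Rightarrow> (nat \<Rightarrow> real \<Rightarrow> real^3)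
     \<Rightarrow> (nat \<Rightarrow> real \<Rightarrow> real^3) \<Rightarrow> nat \<Rightarrow> real \<Rightarrow> real^3" where
  "vfield N \<sigma> \<psi> x v i t =
     - ((norm (v i t))\<^sup>2 / (norm (x i t))\<^sup>2) *\<^sub>R x i t
     + (\<Sum>j=1..N. (1 / real N) *\<^sub>R
          (align_term (\<psi> i j t) (x j t) (x i t) (v j t) - \<psi> i j t *\<^sub>R v i t))
     + (\<Sum>k=1..N. (\<sigma> / real N) *\<^sub>R
          ((norm (x i t))\<^sup>2 *\<^sub>R x k t - (x i t \<bullet> x k t) *\<^sub>R x i t))"

end

theory Submission
  imports Defs
begin


lemma outer3_mv: "outer3 a b *v w = (b \<bullet> w) *\<^sub>R a"
  by (simp add: vec_eq_iff outer3_def matrix_vector_mult_def inner_vec_def sum_distrib_left mult_ac)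

lemma smat_mv: "((c::real) *\<^sub>R (A::real^3^3)) *v w = c *\<^sub>R (A *v w)"
  by (simp add: vec_eq_iff matrix_vector_mult_def sum_distrib_left mult_ac)

lemma rot_inner:
  assumes "x1 \<noteq> x2"
  shows "(rotR x1 x2 *v w) \<bullet> x2 = (x2 \<bullet> x2) * (w \<bullet> x1)"
proof -
  define u where "u = (1 / norm (cross3 x1 x2)) *\<^sub>R cross3 x1 x2"
  have u0: "u \<bullet> x2 = 0" unfolding u_def by (simp add: dot_cross_self)
  have "rotR x1 x2 = (x1 \<bullet> x2) *\<^sub>R mat 1 - outer3 x1 x2 + outer3 x2 x1 + (1 - x1 \<bullet> x2) *\<^sub>R outer3 u u"
    using assms unfolding rotR_def u_def Let_def by simp
  then have "rotR x1 x2 *v w = (x1 \<bullet> x2) *\<^sub>R w - (x2 \<bullet> w) *\<^sub>R x1 + (x1 \<bullet> w) *\<^sub>R x2 + (1 - x1 \<bullet> x2) *\<^sub>R ((u \<bullet> w) *\<^sub>R u)"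
    by (simp add: matrix_vector_mult_add_rdistrib matrix_vector_mult_diff_rdistrib smat_mv outer3_mv)
  then have "(rotR x1 x2 *v w) \<bullet> x2 = ((x1 \<bullet> x2) *\<^sub>R w - (x2 \<bullet> w) *\<^sub>R x1 + (x1 \<bullet> w) *\<^sub>R x2 + (1 - x1 \<bullet> x2) *\<^sub>R ((u \<bullet> w) *\<^sub>R u)) \<bullet> x2"
    by (rule arg_cong)
  also have "\<dots> = (x2 \<bullet> x2) * (w \<bullet> x1)"
    by (simp add: inner_add_left inner_diff_left u0 inner_commute[of w] mult.commute)
  finally show ?thesis .
qed

lemma align_bound:
  assumes "0 \<le> p"
  shows "\<bar>align_term p xj xi vj \<bullet> xi\<bar> \<le> p * (max 1 (xi \<bullet> xi) * \<bar>vj \<bullet> xj\<bar>)"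
proof (cases "xj = - xi")
  case True then show ?thesis using assms by (simp add: align_term_def)
next
  case F: False
  show ?thesis
  proof (cases "xj = xi")
    case True
    have "\<bar>vj \<bullet> xj\<bar> \<le> max 1 (xi \<bullet> xi) * \<bar>vj \<bullet> xj\<bar>"
      using mult_right_mono[of 1 "max 1 (xi \<bullet> xi)" "\<bar>vj \<bullet> xj\<bar>"] by simp
    then show ?thesis using assms F True
      by (simp add: align_term_def rotR_def abs_mult) (rule mult_left_mono, auto)
  next
    case False
    then have "align_term p xj xi vj \<bullet> xi = p * ((xi \<bullet> xi) * (vj \<bullet> xj))"
      using F by (simp add: align_term_def rot_inner)
    then show ?thesis using assms
      by (simp add: abs_mult mult_left_mono mult_right_mono)
  qed
qed


lemma gronwall_zero:
  fixes f f' :: "real \<Rightarrow> real"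
  assumes f0: "f 0 = 0" and nn: "\<And>t. t \<ge> 0 \<Longrightarrow> 0 \<le> f t"
   and d: "\<And>t. t \<ge> 0 \<Longrightarrow> (f has_real_derivative f' t) (at t within {0..})"
   and e: "\<epsilon> > 0" and bd: "\<And>t. t \<ge> 0 \<Longrightarrow> f t < \<epsilon> \<Longrightarrow> f' t \<le> C * f t"
   and t1: "t1 \<ge> 0"
  shows "f t1 = 0"
proof (rule ccontr)
  assume ne: "f t1 \<noteq> 0"
  have cont: "continuous_on {0..} f"
    using d by (meson DERIV_continuous atLeast_iff continuous_on_eq_continuous_within)
  define Z where "Z = {s \<in> {0..t1}. f s = 0}"
  have "closed Z" unfolding Z_def
    by (rule continuous_closed_preimage_constant) (auto intro: continuous_on_subset[OF cont])
  moreover have "0 \<in> Z" using f0 t1 by (simp add: Z_def)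
  moreover have bZ: "bdd_above Z" unfolding Z_def by (auto intro: bdd_aboveI[where M=t1])
  ultimately have sZ: "Sup Z \<in> Z" using closed_contains_Sup by blast
  define s0 where "s0 = Sup Z"
  have s0: "0 \<le> s0" "s0 \<le> t1" "f s0 = 0" using sZ by (auto simp: Z_def s0_def)
  then have lt: "s0 < t1" using ne by (metis order.not_eq_order_implies_strict)
  obtain \<delta> where dp: "\<delta> > 0" and dl: "\<And>t. t \<in> {0..} \<Longrightarrow> dist t s0 < \<delta> \<Longrightarrow> dist (f t) (f s0) < \<epsilon>"
    using cont e s0 unfolding continuous_on_iff by (metis atLeast_iff)
  define t2 where "t2 = min t1 (s0 + \<delta>/2)"
  have t2: "s0 < t2" "t2 \<le> t1" using lt dp by (auto simp: t2_def)
  define g where "g t = exp (- C * t) * f t" for t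
  define g' where "g' t = exp (- C * t) * f' t - C * exp (- C * t) * f t" for t
  have dg: "(g has_derivative (*) (g' t)) (at t within {s0..t2})" if "s0 \<le> t" "t \<le> t2" for t
  proof -
    have "(f has_real_derivative f' t) (at t within {s0..t2})"
      using d[of t] s0 that by (auto intro: has_field_derivative_subset)
    then have "(g has_real_derivative g' t) (at t within {s0..t2})"
      unfolding g_def[abs_def] g'_def
      by (auto intro!: derivative_eq_intros simp: algebra_simps)
    then show ?thesis by (simp add: has_field_derivative_def)
  qed
  obtain \<xi> where xi: "\<xi> \<in> {s0..t2}" and eq: "g t2 - g s0 = g' \<xi> * (t2 - s0)"
  proof -
    have "s0 \<le> t2" using t2 by simp
    from mvt_very_simple[of s0 t2 g "\<lambda>t. (*) (g' t)", OF this dg]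
    show ?thesis using that by blast
  qed
  have "f \<xi> < \<epsilon>"
  proof -
    have "dist \<xi> s0 < \<delta>" using xi dp by (auto simp: dist_real_def t2_def)
    then have "dist (f \<xi>) (f s0) < \<epsilon>" using dl[of \<xi>] xi s0 by auto
    then show ?thesis using s0 by (simp add: dist_real_def)
  qed
  then have "f' \<xi> \<le> C * f \<xi>" using bd xi s0 by auto
  moreover have "g' \<xi> = exp (- C * \<xi>) * (f' \<xi> - C * f \<xi>)" by (simp add: g'_def algebra_simps)
  ultimately have "g' \<xi> \<le> 0" by (simp add: mult_nonneg_nonpos)
  then have "g t2 \<le> 0" using eq t2 s0 by (simp add: g_def mult_nonpos_nonneg)
  then have "f t2 \<le> 0" by (simp add: g_def mult_le_0_iff)
  then have "f t2 = 0" using nn[of t2] t2 s0 by auto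
  then have "t2 \<in> Z" using t2 s0 by (auto simp: Z_def)
  then have "t2 \<le> s0" unfolding s0_def using bZ by (rule cSup_upper)
  then show False using t2 by auto
qed



lemma main:
  fixes N :: nat and \<sigma> :: real
    and \<psi> :: "nat \<Rightarrow> nat \<Rightarrow> real \<Rightarrow> real"
    and x v :: "nat \<Rightarrow> real \<Rightarrow> real^3"
  assumes "N \<ge> 1" and "\<sigma> \<ge> 0"
    and psi_nonneg: "\<And>i j t. i \<in> {1..N} \<Longrightarrow> j \<in> {1..N} \<Longrightarrow> 0 \<le> \<psi> i j t"
    and psi_bdd: "\<exists>M. \<forall>i\<in>{1..N}. \<forall>j\<in>{1..N}. \<forall>t\<ge>0. \<psi> i j t \<le> M"
    and dx: "\<And>i t. i \<in> {1..N} \<Longrightarrow> t \<ge> 0 \<Longrightarrow>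
               (x i has_vector_derivative v i t) (at t within {0..})"
    and dv: "\<And>i t. i \<in> {1..N} \<Longrightarrow> t \<ge> 0 \<Longrightarrow>
               (v i has_vector_derivative vfield N \<sigma> \<psi> x v i t) (at t within {0..})"
    and init_orth: "\<And>i. i \<in> {1..N} \<Longrightarrow> v i 0 \<bullet> x i 0 = 0"
    and init_norm: "\<And>i. i \<in> {1..N} \<Longrightarrow> norm (x i 0) = 1"
  shows "\<forall>i\<in>{1..N}. \<forall>t>0. v i t \<bullet> x i t = 0 \<and> norm (x i t) = 1"
proof -
  obtain M0 where M0: "\<forall>i\<in>{1..N}. \<forall>j\<in>{1..N}. \<forall>t\<ge>0. \<psi> i j t \<le> M0" using psi_bdd by blast
  define M where "M = max M0 0"
  have M: "\<And>i j t. i \<in> {1..N} \<Longrightarrow> j \<in> {1..N} \<Longrightarrow> t \<ge> 0 \<Longrightarrow> \<psi> i j t \<le> M" "M \<ge> 0"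
    using M0 unfolding M_def by force+
  define a where "a i t = v i t \<bullet> x i t" for i t
  define b where "b i t = x i t \<bullet> x i t" for i t
  define a' where "a' i t = v i t \<bullet> v i t + vfield N \<sigma> \<psi> x v i t \<bullet> x i t" for i t
  define f where "f t = (\<Sum>i\<in>{1..N}. (a i t)\<^sup>2 + (b i t - 1)\<^sup>2)" for t
  define f' where "f' t = (\<Sum>i\<in>{1..N}. 2 * a i t * a' i t + 2 * (b i t - 1) * (2 * a i t))" for t
  have da: "((\<lambda>t. a i t) has_real_derivative a' i t) (at t within {0..})"
    if "i \<in> {1..N}" "t \<ge> 0" for i t
    using bounded_bilinear.has_vector_derivative[OF bounded_bilinear_inner, OF dv[OF that] dx[OF that]]
    unfolding has_real_derivative_iff_has_vector_derivative a_def a'_def by simp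
  have db: "((\<lambda>t. b i t) has_real_derivative 2 * a i t) (at t within {0..})"
    if "i \<in> {1..N}" "t \<ge> 0" for i t
    using bounded_bilinear.has_vector_derivative[OF bounded_bilinear_inner, OF dx[OF that] dx[OF that]]
    unfolding has_real_derivative_iff_has_vector_derivative a_def b_def by (simp add: inner_commute)
  have df: "(f has_real_derivative f' t) (at t within {0..})" if "t \<ge> 0" for t
  proof -
    have "((\<lambda>t. (a i t)\<^sup>2 + (b i t - 1)\<^sup>2) has_real_derivative
            2 * a i t * a' i t + 2 * (b i t - 1) * (2 * a i t)) (at t within {0..})"
      if "i \<in> {1..N}" for i
      by (rule derivative_eq_intros da db that \<open>t \<ge> 0\<close> refl)+ simp
    then show ?thesis unfolding f_def[abs_def] f'_def
      by (rule DERIV_sum)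
  qed
  have f0: "f 0 = 0"
  proof -
    have "a i 0 = 0" "b i 0 = 1" if "i \<in> {1..N}" for i
      using init_orth[OF that] init_norm[OF that] unfolding a_def b_def
      by (auto simp: power2_norm_eq_inner[symmetric])
    then show ?thesis unfolding f_def by simp
  qed
  have fnn: "0 \<le> f t" for t unfolding f_def by (intro sum_nonneg) simp
  have bd: "f' t \<le> (real N * (5 * M + 4)) * f t" if "t \<ge> 0" "f t < 1/4" for t
  proof -
    define s where "s = sqrt (f t)"
    have s2: "s * s = f t" using fnn[of t] by (simp add: s_def)
    have s0: "0 \<le> s" using fnn[of t] by (simp add: s_def)
    have sh: "s < 1/2" using that(2) fnn[of t] unfolding s_def
      by (metis real_sqrt_four real_sqrt_less_iff real_sqrt_divide real_sqrt_one)
    have le: "\<bar>a i t\<bar> \<le> s" "\<bar>b i t - 1\<bar> \<le> s" if "i \<in> {1..N}" for i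
    proof -
      have "(a i t)\<^sup>2 + (b i t - 1)\<^sup>2 \<le> f t"
        unfolding f_def using that by (intro member_le_sum) auto
      then have h: "(a i t)\<^sup>2 \<le> f t" "(b i t - 1)\<^sup>2 \<le> f t" using zero_le_power2[of "a i t"] zero_le_power2[of "b i t - 1"] by linarith+
      then have "\<bar>a i t\<bar>\<^sup>2 \<le> f t" "\<bar>b i t - 1\<bar>\<^sup>2 \<le> f t" by simp_all
      then show "\<bar>a i t\<bar> \<le> s" "\<bar>b i t - 1\<bar> \<le> s" unfolding s_def by (auto intro: real_le_rsqrt)
    qed
    have ap: "\<bar>a' i t\<bar> \<le> 5/2 * M * s" if i: "i \<in> {1..N}" for i
    proof -
      have b1: "1/2 \<le> b i t" "b i t \<le> 3/2" using le(2)[OF i] sh by auto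
      then have xn: "x i t \<bullet> x i t \<noteq> 0" unfolding b_def by auto
      have sig: "(\<Sum>k=1..N. (\<sigma> / real N) *\<^sub>R
          ((norm (x i t))\<^sup>2 *\<^sub>R x k t - (x i t \<bullet> x k t) *\<^sub>R x i t)) \<bullet> x i t = 0"
        apply (simp only: inner_sum_left inner_scaleR_left inner_diff_left power2_norm_eq_inner)
        apply (rule sum.neutral, rule ballI)
        subgoal for k by (simp add: inner_commute[of "x k t" "x i t"])
        done
      have "a' i t = (\<Sum>j=1..N. (1 / real N) * (align_term (\<psi> i j t) (x j t) (x i t) (v j t) \<bullet> x i t - \<psi> i j t * a i t))"
        unfolding a'_def vfield_def inner_add_left sig
        using xn by (simp add: inner_sum_left inner_diff_left power2_norm_eq_inner a_def)
      also have "\<bar>\<dots>\<bar> \<le> (\<Sum>j=1..N. (1 / real N) * (5/2 * M * s))"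
      proof -
        have "\<bar>(1 / real N) * (align_term (\<psi> i j t) (x j t) (x i t) (v j t) \<bullet> x i t - \<psi> i j t * a i t)\<bar>
              \<le> (1 / real N) * (5/2 * M * s)" if j: "j \<in> {1..N}" for j
        proof -
          have p0: "0 \<le> \<psi> i j t" using psi_nonneg i j by auto
          have pM: "\<psi> i j t \<le> M" using M(1) i j \<open>t \<ge> 0\<close> by auto
          have "\<bar>align_term (\<psi> i j t) (x j t) (x i t) (v j t) \<bullet> x i t\<bar> \<le> \<psi> i j t * (3/2 * s)"
          proof -
            have "max 1 (x i t \<bullet> x i t) * \<bar>v j t \<bullet> x j t\<bar> \<le> 3/2 * s"
              using b1 le(1)[OF j] unfolding b_def a_def
              by (intro mult_mono) auto
            then show ?thesis using align_bound[OF p0, of "x j t" "x i t" "v j t"] p0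
              by (meson mult_left_mono order_trans)
          qed
          moreover have "\<bar>\<psi> i j t * a i t\<bar> \<le> \<psi> i j t * s"
            using le(1)[OF i] p0 by (simp add: abs_mult mult_left_mono)
          ultimately have "\<bar>align_term (\<psi> i j t) (x j t) (x i t) (v j t) \<bullet> x i t - \<psi> i j t * a i t\<bar>
                \<le> \<psi> i j t * (5/2 * s)"
            using abs_triangle_ineq4[of "align_term (\<psi> i j t) (x j t) (x i t) (v j t) \<bullet> x i t" "\<psi> i j t * a i t"]
              distrib_left[of "\<psi> i j t" "3/2 * s" s] by simp
          also have "\<dots> \<le> M * (5/2 * s)" using pM s0 by (intro mult_right_mono) auto
          finally have D: "\<bar>align_term (\<psi> i j t) (x j t) (x i t) (v j t) \<bullet> x i t - \<psi> i j t * a i t\<bar> \<le> 5/2 * M * s"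
            by (simp add: algebra_simps)
          have "\<bar>(1 / real N) * (align_term (\<psi> i j t) (x j t) (x i t) (v j t) \<bullet> x i t - \<psi> i j t * a i t)\<bar>
             = (1 / real N) * \<bar>align_term (\<psi> i j t) (x j t) (x i t) (v j t) \<bullet> x i t - \<psi> i j t * a i t\<bar>"
            by (simp add: abs_mult)
          also have "\<dots> \<le> (1 / real N) * (5/2 * M * s)"
            by (rule mult_left_mono[OF D]) simp
          finally show ?thesis .
        qed
        then show ?thesis by (rule order_trans[OF sum_abs sum_mono])
      qed
      also have "\<dots> = 5/2 * M * s" using \<open>N \<ge> 1\<close> by simp
      finally show ?thesis .
    qed
    have "f' t \<le> (\<Sum>i\<in>{1..N}. (5 * M + 4) * f t)"
      unfolding f'_def
    proof (rule sum_mono)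
      fix i assume i: "i \<in> {1..N}"
      have h1: "\<bar>a i t * a' i t\<bar> \<le> s * (5/2 * M * s)"
        unfolding abs_mult using le(1)[OF i] ap[OF i] s0 M(2) by (intro mult_mono) auto
      have h2: "\<bar>(b i t - 1) * a i t\<bar> \<le> s * s"
        unfolding abs_mult using le[OF i] s0 by (intro mult_mono) auto
      have e1: "2 * a i t * a' i t + 2 * (b i t - 1) * (2 * a i t) = 2 * (a i t * a' i t) + 4 * ((b i t - 1) * a i t)"
        by (simp add: algebra_simps)
      have e2: "(5 * M + 4) * f t = 2 * (s * (5/2 * M * s)) + 4 * (s * s)"
        using s2 by (simp add: algebra_simps)
      show "2 * a i t * a' i t + 2 * (b i t - 1) * (2 * a i t) \<le> (5 * M + 4) * f t"
        unfolding e1 e2 using h1 h2 abs_ge_self[of "a i t * a' i t"] abs_ge_self[of "(b i t - 1) * a i t"]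
        by linarith
    qed
    also have "\<dots> = (real N * (5 * M + 4)) * f t" by simp
    finally show ?thesis .
  qed
  have fz: "f t = 0" if "t \<ge> 0" for t
    by (rule gronwall_zero[of f f' "1/4" "real N * (5 * M + 4)"]) (use f0 fnn df bd that in auto)
  show ?thesis
  proof (intro ballI allI impI)
    fix i t assume i: "i \<in> {1..N}" and t: "(0::real) < t"
    have "(a i t)\<^sup>2 + (b i t - 1)\<^sup>2 \<le> f t"
      unfolding f_def using i by (intro member_le_sum) auto
    then have "(a i t)\<^sup>2 + (b i t - 1)\<^sup>2 \<le> 0" using fz[of t] t by simp
    then have "(a i t)\<^sup>2 = 0" "(b i t - 1)\<^sup>2 = 0"
      using zero_le_power2[of "a i t"] zero_le_power2[of "b i t - 1"] by linarith+
    then have "a i t = 0" "b i t = 1" by auto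
    then show "v i t \<bullet> x i t = 0 \<and> norm (x i t) = 1"
      unfolding a_def b_def by (simp add: norm_eq_sqrt_inner)
  qed
qed


theorem proposition3p2:
  fixes N :: nat and \<sigma> :: real
    and \<psi> :: "nat \<Rightarrow> nat \<Rightarrow> real \<Rightarrow> real"
    and x v :: "nat \<Rightarrow> real \<Rightarrow> real^3"
  assumes "N \<ge> 1" and "\<sigma> \<ge> 0"
    and psi_nonneg: "\<And>i j t. i \<in> {1..N} \<Longrightarrow> j \<in> {1..N} \<Longrightarrow> 0 \<le> \<psi> i j t"
    and psi_bdd: "\<exists>M. \<forall>i\<in>{1..N}. \<forall>j\<in>{1..N}. \<forall>t\<ge>0. \<psi> i j t \<le> M"
    and dx: "\<And>i t. i \<in> {1..N} \<Longrightarrow> t \<ge> 0 \<Longrightarrow>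
               (x i has_vector_derivative v i t) (at t within {0..})"
    and dv: "\<And>i t. i \<in> {1..N} \<Longrightarrow> t \<ge> 0 \<Longrightarrow>
               (v i has_vector_derivative vfield N \<sigma> \<psi> x v i t) (at t within {0..})"
    and init_orth: "\<And>i. i \<in> {1..N} \<Longrightarrow> v i 0 \<bullet> x i 0 = 0"
    and init_norm: "\<And>i. i \<in> {1..N} \<Longrightarrow> norm (x i 0) = 1"
  shows "\<forall>i\<in>{1..N}. \<forall>t>0. v i t \<bullet> x i t = 0 \<and> norm (x i t) = 1"
  using main[OF assms] .

end
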